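(* Suppose at least one class uses an imitative via comparison revision protocol and every other class uses an excess payoff or pairwise comparison revision protocol. Let $\mu^\star$ be a rest point of the evolutionary dynamics (E) which is not an MSNE. Then there exists a class $d\in[C]$ using an imitative via comparison protocol such that every $v\in\arg\max_{j\in\mathcal U^d_D}F^d_j(\mu^\star)$ satisfies $\mu^{d\star}[\mathcal S^d,v]=0$ and $G^d_v(\mu^\star)>0$, where $G^d_v(\mu)=\sum_{u'\in\mathcal U^d_D}\frac{\mu^d[\mathcal S^d,u']}{m^d}\big(r^d_{u'v}(F^d(\mu),\mu^d[\mathcal S^d,\cdot])-r^d_{vu'}(F^d(\mu),\mu^d[\mathcal S^d,\cdot])\big)$.
   Context: Setting. There are $C$ classes of players, $[C]=\{1,\dots,C\}$. For each class $c\in[C]$: $\mathcal S^c$ is a finite state set with $p^c$ elements; for each $s\in\mathcal S^c$, $\mathcal A^c(s)$ is a nonempty finite action set; $\phi^c(\cdot\mid s,a)$ is a probability distribution on $\mathcal S^c$ for each $s\in\mathcal S^c$, $a\in\mathcal A^c(s)$; $\mathcal U^c_D$ is a finite set of $n^c$ deterministic stationary policies, each $u\in\mathcal U^c_D$ assigning to every $s$ a point mass $u(\cdot\mid s)$ on some action of $\mathcal A^c(s)$; $m^c>0$ is the mass of class $c$; $R^c_d>0$ is the state-transition rate. Let $n=\sum_c n^c$. For $u\in\mathcal U^c_D$ put $\phi^{c,u}(s\mid s')=\sum_{a'\in\mathcal A^c(s')}\phi^c(s\mid s',a')u(a'\mid s')$; standing assumption: the Markov chain on $\mathcal S^c$ with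 kernel $\phi^{c,u}$ has a unique recurrent communicating class, hence a unique stationary distribution $\eta^{c,u}$. The population state is $\mu=(\mu^c)_{c\in[C]}\in X:=\prod_c X^c$, where $X^c=\{\mu^c\in\mathbb R_{\ge0}^{\mathcal S^c\times\mathcal U^c_D}:\sum_{s,u}\mu^c[s,u]=m^c\}$; write $\mu^c[\mathcal S^c,u]:=\sum_{s\in\mathcal S^c}\mu^c[s,u]$ and $\mu^c[\mathcal S^c,\cdot]\in\mathbb R^{n^c}_{\ge0}$ for the vector of these. A payoff map $F=(F^c)_{c\in[C]}$ is given, with $F^c$ continuously differentiable on an open neighborhood of $X$ and valued in $\mathbb R^{\mathcal U^c_D}$ ($F^c_u(\mu)$ is the payoff of policy $u$ for class $c$). Each class has a revision protocol $\rho^c=(\rho^c_{uv})_{u,v\in\mathcal U^c_D}$, a Lipschitz continuous map $\mathbb R^{n^c}\times\mathbb R^{n^c}_{\ge0}\to\mathbb R^{n^c\times n^c}_{\ge0}$ whose first argument is a payoff vector and second a policy distribution. The evolutionary dynamics (E) are the ODE on $X$: for all $c\in[C]$, $s\in\mathcal S^c$, $u\in\mathcal U^c_D$, $\dot\mu^c[s,u]=f^{c,d}_{s,u}(\mu)+f^{c,r}_{s,u}(\mu)$, where $f^{c,d}_{s,u}(\mu)=R^c_d\sum_{s'\in\mathcal S^c}\sum_{a'\in\mathcal A^c(s')}\phi^c(s\mid s',a')u(a'\mid s')\mu^c[s',u]-R^c_d\mu^c[s,u]$ and $f^{c,r}_{s,u}(\mu)=\sum_{u'\in\mathcal U^c_D}\mu^c[s,u']\rho^c_{u'u}(F^c(\mu),\mu^c[\mathcal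 S^c,\cdot])-\mu^c[s,u]\sum_{u'\in\mathcal U^c_D}\rho^c_{uu'}(F^c(\mu),\mu^c[\mathcal S^c,\cdot])$. Solutions from $X$ exist, are unique and remain in $X$. A state $\mu\in X$ is a mixed stationary Nash equilibrium (MSNE) if for every $c\in[C]$: (a) for all $u\in\mathcal U^c_D$, $\mu^c[\mathcal S^c,u]>0\Rightarrow F^c_u(\mu)\ge F^c_v(\mu)$ for all $v\in\mathcal U^c_D$; and (b) $f^{c,d}_{s,u}(\mu)=0$ for all $s\in\mathcal S^c,u\in\mathcal U^c_D$. $\mathrm{MSNE}(F,\phi)$ denotes the set of MSNE. Protocol families (for class $c$; $\pi\in\mathbb R^{n^c}$ a payoff vector, $x\in\mathbb R^{n^c}_{\ge0}$ a policy distribution of total mass $m^c$): - imitative: $\rho^c_{uv}(\pi,x)=\frac{x_v}{m^c}r^c_{uv}(\pi,x)$ with $r^c\ge0$ Lipschitz and monotone net conditional imitation rates: for all $u,v,w$, $\pi_v\ge\pi_u\iff r^c_{wv}(\pi,x)-r^c_{vw}(\pi,x)\ge r^c_{wu}(\pi,x)-r^c_{uw}(\pi,x)$; - imitative via comparison: an imitative protocol with $r^c_{uv}(\pi,x)=\varphi^c(\pi_v-\pi_u)$, where $\varphi^c$ is Lipschitz, $\varphi^c(d)=0$ for $d\le0$ and $\varphi^c(d)>0$ for $d>0$; - excess payoff: $\rho^c_{uv}(\pi,x)=\tau^c_v(\hat\pi)$ with $\hat\pi_v=\pi_v-\frac1{m^c}\sum_w x_w\pi_w$, $\tau^c:\mathbb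 R^{n^c}\to\mathbb R^{n^c}_{\ge0}$ Lipschitz and $\tau^c(\hat\pi)^\top\hat\pi>0$ whenever $\hat\pi$ has a positive component; it is separable if $\tau^c_v(\hat\pi)=\tau^c_v(\hat\pi_v)$ depends only on $\hat\pi_v$, with $\tau^c_v(d)>0\iff d>0$; - pairwise comparison: $\rho^c_{uv}(\pi,x)=\rho^c_{uv}(\pi)$ independent of $x$, Lipschitz, with $\rho^c_{uv}(\pi)>0\iff\pi_v>\pi_u$; it is impartial if $\rho^c_{uv}(\pi)=\varphi^c_v(\pi_v-\pi_u)$ for some functions $\varphi^c_v$. *)

theory Defs
  imports "HOL-Analysis.Analysis"
begin

text \<open>
All classes draw their states from a common
finite type 's, their actions from a finite type 'a and their (names of) policies from a
finite type 'u; class c uses the state set S c, action sets A c s and the policy set U c.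
A population state is a vector mu :: real^('c::finite \<times> 's::finite \<times> 'u::finite); the coordinate
mu $ (c,s,u) is mu^c[s,u].  Coordinates (c,s,u) with s outside S c or u outside U c are
required to vanish in X (they are padding only).  A deterministic policy u of class c is
given by pol c u s, the action it chooses in state s.
\<close>

definition pmass :: "('c \<Rightarrow> 'u \<Rightarrow> 's \<Rightarrow> 'a) \<Rightarrow> 'c \<Rightarrow> 'u \<Rightarrow> 's \<Rightarrow> 'a \<Rightarrow> real" where
  "pmass pol c u s a = (if a = pol c u s then 1 else 0)"

text \<open>phi c s' a s = phi^c(s | s', a).  Kernel of policy u: phi^{c,u}(s | s').\<close>
definition kernel ::
  "('c \<Rightarrow> 's \<Rightarrow> 'a set) \<Rightarrow> ('c \<Rightarrow> 's \<Rightarrow> 'a \<Rightarrow> 's \<Rightarrow> real) \<Rightarrow> ('c \<Rightarrow> 'u \<Rightarrow> 's \<Rightarrow> 'a)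
    \<Rightarrow> 'c \<Rightarrow> 'u \<Rightarrow> 's \<Rightarrow> 's \<Rightarrow> real" where
  "kernel A phi pol c u s' s = (\<Sum>a'\<in>A c s'. phi c s' a' s * pmass pol c u s' a')"

definition reach :: "'s set \<Rightarrow> ('s \<Rightarrow> 's \<Rightarrow> real) \<Rightarrow> 's \<Rightarrow> 's \<Rightarrow> bool" where
  "reach S P x y \<longleftrightarrow> (x, y) \<in> {(a, b). a \<in> S \<and> b \<in> S \<and> P a b > 0}\<^sup>*"

definition recurrent :: "'s set \<Rightarrow> ('s \<Rightarrow> 's \<Rightarrow> real) \<Rightarrow> 's \<Rightarrow> bool" where
  "recurrent S P x \<longleftrightarrow> x \<in> S \<and> (\<forall>y\<in>S. reach S P x y \<longrightarrow> reach S P y x)"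

definition unique_recurrent_class :: "'s set \<Rightarrow> ('s \<Rightarrow> 's \<Rightarrow> real) \<Rightarrow> bool" where
  "unique_recurrent_class S P \<longleftrightarrow>
     (\<exists>x. recurrent S P x) \<and> (\<forall>x y. recurrent S P x \<and> recurrent S P y \<longrightarrow> reach S P x y)"

definition popX :: "('c \<Rightarrow> 's set) \<Rightarrow> ('c \<Rightarrow> 'u set) \<Rightarrow> ('c \<Rightarrow> real)
    \<Rightarrow> (real^('c::finite \<times> 's::finite \<times> 'u::finite)) set" where
  "popX S U m = {mu. (\<forall>c s u. (s \<in> S c \<and> u \<in> U c \<longrightarrow> mu $ (c, s, u) \<ge> 0) \<and>
                              (\<not> (s \<in> S c \<and> u \<in> U c) \<longrightarrow> mu $ (c, s, u) = 0)) \<and>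
                    (\<forall>c. (\<Sum>s\<in>S c. \<Sum>u\<in>U c. mu $ (c, s, u)) = m c)}"

definition xdist :: "('c \<Rightarrow> 's set) \<Rightarrow> real^('c::finite \<times> 's::finite \<times> 'u::finite) \<Rightarrow> 'c \<Rightarrow> 'u \<Rightarrow> real" where
  "xdist S mu c u = (\<Sum>s\<in>S c. mu $ (c, s, u))"

definition f_d ::
  "('c \<Rightarrow> 's set) \<Rightarrow> ('c \<Rightarrow> 's \<Rightarrow> 'a set) \<Rightarrow> ('c \<Rightarrow> 's \<Rightarrow> 'a \<Rightarrow> 's \<Rightarrow> real)
   \<Rightarrow> ('c \<Rightarrow> 'u \<Rightarrow> 's \<Rightarrow> 'a) \<Rightarrow> ('c \<Rightarrow> real) \<Rightarrow> real^('c::finite \<times> 's::finite \<times> 'u::finite) \<Rightarrow> 'c \<Rightarrow> 's \<Rightarrow> 'u \<Rightarrow> real" where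
  "f_d S A phi pol Rd mu c s u =
     Rd c * (\<Sum>s'\<in>S c. \<Sum>a'\<in>A c s'. phi c s' a' s * pmass pol c u s' a' * mu $ (c, s', u))
     - Rd c * mu $ (c, s, u)"

text \<open>rho c pi x u v = rho^c_{uv}(pi, x); F c mu v = F^c_v(mu).\<close>
definition f_r ::
  "('c \<Rightarrow> 's set) \<Rightarrow> ('c \<Rightarrow> 'u set) \<Rightarrow> ('c \<Rightarrow> real^('c::finite \<times> 's::finite \<times> 'u::finite) \<Rightarrow> 'u \<Rightarrow> real)
   \<Rightarrow> ('c \<Rightarrow> ('u \<Rightarrow> real) \<Rightarrow> ('u \<Rightarrow> real) \<Rightarrow> 'u \<Rightarrow> 'u \<Rightarrow> real)
   \<Rightarrow> real^('c::finite \<times> 's::finite \<times> 'u::finite) \<Rightarrow> 'c \<Rightarrow> 's \<Rightarrow> 'u \<Rightarrow> real" where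
  "f_r S U F rho mu c s u =
     (\<Sum>u'\<in>U c. mu $ (c, s, u') * rho c (F c mu) (xdist S mu c) u' u)
     - mu $ (c, s, u) * (\<Sum>u'\<in>U c. rho c (F c mu) (xdist S mu c) u u')"

definition rest_point where
  "rest_point S U A phi pol m Rd F rho mu \<longleftrightarrow> mu \<in> popX S U m \<and>
     (\<forall>c. \<forall>s\<in>S c. \<forall>u\<in>U c. f_d S A phi pol Rd mu c s u + f_r S U F rho mu c s u = 0)"

definition MSNE where
  "MSNE S U A phi pol m Rd F mu \<longleftrightarrow> mu \<in> popX S U m \<and>
     (\<forall>c. (\<forall>u\<in>U c. xdist S mu c u > 0 \<longrightarrow> (\<forall>v\<in>U c. F c mu u \<ge> F c mu v)) \<and>
          (\<forall>s\<in>S c. \<forall>u\<in>U c. f_d S A phi pol Rd mu c s u = 0))"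

definition nonneg_on :: "'u set \<Rightarrow> ('u \<Rightarrow> real) \<Rightarrow> bool" where
  "nonneg_on U x \<longleftrightarrow> (\<forall>w\<in>U. x w \<ge> 0)"

definition protocol :: "'u set \<Rightarrow> (('u \<Rightarrow> real) \<Rightarrow> ('u \<Rightarrow> real) \<Rightarrow> 'u \<Rightarrow> 'u \<Rightarrow> real) \<Rightarrow> bool" where
  "protocol U rho \<longleftrightarrow>
     (\<exists>L. \<forall>p p' x x'. nonneg_on U x \<and> nonneg_on U x' \<longrightarrow>
         (\<forall>u\<in>U. \<forall>v\<in>U. \<bar>rho p x u v - rho p' x' u v\<bar>
            \<le> L * ((\<Sum>w\<in>U. \<bar>p w - p' w\<bar>) + (\<Sum>w\<in>U. \<bar>x w - x' w\<bar>)))) \<and>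
     (\<forall>p x. nonneg_on U x \<longrightarrow> (\<forall>u\<in>U. \<forall>v\<in>U. rho p x u v \<ge> 0))"

definition policy_dist :: "'u set \<Rightarrow> real \<Rightarrow> ('u \<Rightarrow> real) \<Rightarrow> bool" where
  "policy_dist U m x \<longleftrightarrow> nonneg_on U x \<and> (\<Sum>w\<in>U. x w) = m"

definition r_comp :: "(real \<Rightarrow> real) \<Rightarrow> ('u \<Rightarrow> real) \<Rightarrow> ('u \<Rightarrow> real) \<Rightarrow> 'u \<Rightarrow> 'u \<Rightarrow> real" where
  "r_comp varphi p x u v = varphi (p v - p u)"

definition imitative_via_comparison ::
  "'u set \<Rightarrow> real \<Rightarrow> (('u \<Rightarrow> real) \<Rightarrow> ('u \<Rightarrow> real) \<Rightarrow> 'u \<Rightarrow> 'u \<Rightarrow> real) \<Rightarrow> (real \<Rightarrow> real) \<Rightarrow> bool" where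
  "imitative_via_comparison U m rho varphi \<longleftrightarrow>
     (\<exists>L. \<forall>a b. \<bar>varphi a - varphi b\<bar> \<le> L * \<bar>a - b\<bar>) \<and>
     (\<forall>d. d \<le> 0 \<longrightarrow> varphi d = 0) \<and> (\<forall>d. d > 0 \<longrightarrow> varphi d > 0) \<and>
     (\<forall>p x. nonneg_on U x \<longrightarrow> (\<forall>u\<in>U. \<forall>w\<in>U. \<forall>v\<in>U.
        (p v \<ge> p u \<longleftrightarrow>
          r_comp varphi p x w v - r_comp varphi p x v w \<ge> r_comp varphi p x w u - r_comp varphi p x u w))) \<and>
     (\<forall>p x. policy_dist U m x \<longrightarrow>
        (\<forall>u\<in>U. \<forall>v\<in>U. rho p x u v = x v / m * r_comp varphi p x u v))"

definition excess_payoff ::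
  "'u set \<Rightarrow> real \<Rightarrow> (('u \<Rightarrow> real) \<Rightarrow> ('u \<Rightarrow> real) \<Rightarrow> 'u \<Rightarrow> 'u \<Rightarrow> real) \<Rightarrow> bool" where
  "excess_payoff U m rho \<longleftrightarrow>
     (\<exists>tau :: ('u \<Rightarrow> real) \<Rightarrow> 'u \<Rightarrow> real.
        (\<exists>L. \<forall>y y'. \<forall>v\<in>U. \<bar>tau y v - tau y' v\<bar> \<le> L * (\<Sum>w\<in>U. \<bar>y w - y' w\<bar>)) \<and>
        (\<forall>y. \<forall>v\<in>U. tau y v \<ge> 0) \<and>
        (\<forall>y. (\<exists>v\<in>U. y v > 0) \<longrightarrow> (\<Sum>v\<in>U. tau y v * y v) > 0) \<and>
        (\<forall>p x. policy_dist U m x \<longrightarrow>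
           (\<forall>u\<in>U. \<forall>v\<in>U. rho p x u v = tau (\<lambda>w. p w - (1 / m) * (\<Sum>w'\<in>U. x w' * p w')) v)))"

definition pairwise_comparison ::
  "'u set \<Rightarrow> (('u \<Rightarrow> real) \<Rightarrow> ('u \<Rightarrow> real) \<Rightarrow> 'u \<Rightarrow> 'u \<Rightarrow> real) \<Rightarrow> bool" where
  "pairwise_comparison U rho \<longleftrightarrow>
     (\<forall>p x x'. nonneg_on U x \<and> nonneg_on U x' \<longrightarrow> (\<forall>u\<in>U. \<forall>v\<in>U. rho p x u v = rho p x' u v)) \<and>
     (\<forall>p x. nonneg_on U x \<longrightarrow> (\<forall>u\<in>U. \<forall>v\<in>U. rho p x u v > 0 \<longleftrightarrow> p v > p u))"

definition G_imit ::
  "('c \<Rightarrow> 's set) \<Rightarrow> ('c \<Rightarrow> 'u set) \<Rightarrow> ('c \<Rightarrow> real) \<Rightarrow> ('c \<Rightarrow> real^('c::finite \<times> 's::finite \<times> 'u::finite) \<Rightarrow> 'u \<Rightarrow> real)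
   \<Rightarrow> (real \<Rightarrow> real) \<Rightarrow> 'c \<Rightarrow> 'u \<Rightarrow> real^('c::finite \<times> 's::finite \<times> 'u::finite) \<Rightarrow> real" where
  "G_imit S U m F varphi d v mu =
     (\<Sum>u'\<in>U d. xdist S mu d u' / m d *
        (r_comp varphi (F d mu) (xdist S mu d) u' v - r_comp varphi (F d mu) (xdist S mu d) v u'))"

end

theory Submission
  imports Defs
begin


lemma sum_fd_zero:
  fixes S :: "'c::finite \<Rightarrow> 's::finite set" and A :: "'c \<Rightarrow> 's \<Rightarrow> 'a::finite set"
    and mu :: "real^('c \<times> 's \<times> 'u::finite)"
  assumes phi_sum: "\<And>s' a. s' \<in> S c \<Longrightarrow> a \<in> A c s' \<Longrightarrow> (\<Sum>s\<in>S c. phi c s' a s) = 1"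
    and pol_act: "\<And>s. s \<in> S c \<Longrightarrow> pol c u s \<in> A c s"
  shows "(\<Sum>s\<in>S c. f_d S A phi pol Rd mu c s u) = 0"
proof -
  have "(\<Sum>s\<in>S c. \<Sum>s'\<in>S c. \<Sum>a'\<in>A c s'. phi c s' a' s * pmass pol c u s' a' * mu $ (c, s', u))
      = (\<Sum>s'\<in>S c. \<Sum>a'\<in>A c s'. \<Sum>s\<in>S c. phi c s' a' s * pmass pol c u s' a' * mu $ (c, s', u))"
    by (subst sum.swap, rule sum.cong[OF refl], rule sum.swap)
  also have "\<dots> = (\<Sum>s'\<in>S c. mu $ (c, s', u))"
  proof (rule sum.cong[OF refl])
    fix s' assume s': "s' \<in> S c"
    have "(\<Sum>a'\<in>A c s'. \<Sum>s\<in>S c. phi c s' a' s * pmass pol c u s' a' * mu $ (c, s', u))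
       = (\<Sum>a'\<in>A c s'. pmass pol c u s' a' * mu $ (c, s', u))"
      using phi_sum[OF s'] by (simp add: sum_distrib_right[symmetric])
    also have "\<dots> = mu $ (c, s', u)"
    proof -
      have "\<And>a'. pmass pol c u s' a' * mu $ (c, s', u) = (if pol c u s' = a' then mu $ (c, s', u) else 0)"
        by (auto simp: pmass_def)
      hence "(\<Sum>a'\<in>A c s'. pmass pol c u s' a' * mu $ (c, s', u)) = (\<Sum>a'\<in>A c s'. (if pol c u s' = a' then mu $ (c, s', u) else 0))"
        by simp
      also have "\<dots> = mu $ (c, s', u)" using pol_act[OF s'] by (simp add: sum.delta)
      finally show ?thesis .
    qed
    finally show "(\<Sum>a'\<in>A c s'. \<Sum>s\<in>S c. phi c s' a' s * pmass pol c u s' a' * mu $ (c, s', u)) = mu $ (c, s', u)" .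
  qed
  finally have e: "(\<Sum>s\<in>S c. \<Sum>s'\<in>S c. \<Sum>a'\<in>A c s'. phi c s' a' s * pmass pol c u s' a' * mu $ (c, s', u)) = (\<Sum>s'\<in>S c. mu $ (c, s', u))" .
  show ?thesis unfolding f_d_def
    by (simp add: sum_subtractf sum_distrib_left[symmetric] e)
qed

lemma sum_fr:
  fixes S :: "'c::finite \<Rightarrow> 's::finite set" and mu :: "real^('c \<times> 's \<times> 'u::finite)"
  shows "(\<Sum>s\<in>S c. f_r S U F rho mu c s u) =
    (\<Sum>u'\<in>U c. xdist S mu c u' * rho c (F c mu) (xdist S mu c) u' u)
     - xdist S mu c u * (\<Sum>u'\<in>U c. rho c (F c mu) (xdist S mu c) u u')"
proof -
  let ?r = "rho c (F c mu) (xdist S mu c)"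
  have 1: "(\<Sum>s\<in>S c. f_r S U F rho mu c s u) =
     (\<Sum>s\<in>S c. \<Sum>u'\<in>U c. mu $ (c, s, u') * ?r u' u) - (\<Sum>s\<in>S c. mu $ (c, s, u)) * (\<Sum>u'\<in>U c. ?r u u')"
    unfolding f_r_def by (simp only: sum_subtractf sum_distrib_right)
  have 2: "(\<Sum>s\<in>S c. \<Sum>u'\<in>U c. mu $ (c, s, u') * ?r u' u) = (\<Sum>u'\<in>U c. \<Sum>s\<in>S c. mu $ (c, s, u') * ?r u' u)"
    by (rule sum.swap)
  have 3: "(\<Sum>u'\<in>U c. \<Sum>s\<in>S c. mu $ (c, s, u') * ?r u' u) = (\<Sum>u'\<in>U c. xdist S mu c u' * ?r u' u)"
    unfolding xdist_def by (simp only: sum_distrib_right)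
  show ?thesis using 1 2 3 by (simp add: xdist_def)
qed



lemma pairwise_NE:
  fixes U :: "'u set" and x p :: "'u \<Rightarrow> real" and r :: "'u \<Rightarrow> 'u \<Rightarrow> real"
  assumes fin: "finite U"
    and xnn: "\<And>w. w \<in> U \<Longrightarrow> x w \<ge> 0"
    and rnn: "\<And>u v. u \<in> U \<Longrightarrow> v \<in> U \<Longrightarrow> r u v \<ge> 0"
    and rpos: "\<And>u v. u \<in> U \<Longrightarrow> v \<in> U \<Longrightarrow> r u v > 0 \<longleftrightarrow> p v > p u"
    and rest: "\<And>u. u \<in> U \<Longrightarrow> (\<Sum>u'\<in>U. x u' * r u' u) - x u * (\<Sum>u'\<in>U. r u u') = 0"
    and u: "u \<in> U" "x u > 0" and v: "v \<in> U"
  shows "p v \<le> p u"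
proof (rule ccontr)
  assume nle: "\<not> p v \<le> p u"
  define W where "W = {w\<in>U. x w > 0}"
  have finW: "finite W" "W \<noteq> {}" using fin u by (auto simp: W_def)
  have "Min (p ` W) \<in> p ` W" using finW by (intro Min_in) auto
  then obtain w where w: "w \<in> W" "p w = Min (p ` W)" by auto
  have wmin: "\<And>w'. w' \<in> W \<Longrightarrow> p w \<le> p w'" using w finW by auto
  have wU: "w \<in> U" "x w > 0" using w by (auto simp: W_def)
  have "p w \<le> p u" using wmin u by (auto simp: W_def)
  hence pv: "p v > p w" using nle by simp
  have in0: "(\<Sum>u'\<in>U. x u' * r u' w) = 0"
  proof (rule sum.neutral, intro ballI)
    fix u' assume u': "u' \<in> U"
    show "x u' * r u' w = 0"
    proof (cases "x u' > 0")
      case True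
      hence "p w \<le> p u'" using wmin u' by (auto simp: W_def)
      hence "\<not> r u' w > 0" using rpos[OF u' wU(1)] by simp
      hence "r u' w = 0" using rnn[OF u' wU(1)] by simp
      thus ?thesis by simp
    next
      case False
      hence "x u' = 0" using xnn[OF u'] by simp
      thus ?thesis by simp
    qed
  qed
  have "r w v > 0" using rpos[OF wU(1) v] pv by simp
  hence "(\<Sum>u'\<in>U. r w u') > 0"
    using sum_pos2[OF fin v, of "r w"] rnn wU(1) by auto
  hence "x w * (\<Sum>u'\<in>U. r w u') > 0" using wU by simp
  with rest[OF wU(1)] in0 show False by linarith
qed



lemma excess_single:
  fixes U :: "'u set" and tau :: "('u \<Rightarrow> real) \<Rightarrow> 'u \<Rightarrow> real" and y :: "'u \<Rightarrow> real"
  assumes fin: "finite U"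
    and Lip: "\<forall>y y'. \<forall>v\<in>U. \<bar>tau y v - tau y' v\<bar> \<le> L * (\<Sum>w\<in>U. \<bar>y w - y' w\<bar>)"
    and tnn: "\<forall>y. \<forall>v\<in>U. tau y v \<ge> 0"
    and tpos: "\<forall>y. (\<exists>v\<in>U. y v > 0) \<longrightarrow> (\<Sum>v\<in>U. tau y v * y v) > 0"
    and ynp: "\<And>v. v \<in> U \<Longrightarrow> y v \<le> 0"
    and u: "u \<in> U" "y u = 0" "tau y u > 0"
    and w: "w \<in> U" "y w = 0" "tau y w > 0" and uw: "u \<noteq> w"
  shows False
proof -
  define a where "a = tau y u"
  define b where "b = tau y w"
  define K where "K = 2 * a / b"
  define L1 where "L1 = \<bar>L\<bar> + 1"
  define C where "C = L1 * (1 + K)"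
  define e where "e = a / (2 * ((1 + K) * C))"
  have a: "a > 0" and b: "b > 0" using u w by (auto simp: a_def b_def)
  have K: "K > 0" and Kb: "K * b = 2 * a" using a b by (auto simp: K_def)
  have L1: "L1 > 0" by (simp add: L1_def)
  have C: "C > 0" using L1 K by (simp add: C_def)
  have e: "e > 0" using a K C by (simp add: e_def)
  have nz: "1 + K \<noteq> 0" "C \<noteq> 0" using K C by auto
  have gen: "\<And>X::real. X \<noteq> 0 \<Longrightarrow> X * (a / (2 * X)) = a / 2" by simp
  have eC: "(1 + K) * C * e = a / 2" unfolding e_def by (rule gen) (use nz in simp)
  define y' where "y' = y(u := e, w := - K * e)"
  have y'u: "y' u = e" and y'w: "y' w = - K * e" using uw by (auto simp: y'_def)
  have y'o: "\<And>v. v \<noteq> u \<Longrightarrow> v \<noteq> w \<Longrightarrow> y' v = y v" by (auto simp: y'_def)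
  have D: "(\<Sum>z\<in>U. \<bar>y z - y' z\<bar>) = (1 + K) * e"
  proof -
    have "(\<Sum>z\<in>U. \<bar>y z - y' z\<bar>) = (\<Sum>z\<in>U. (if z = u then e else 0) + (if z = w then K * e else 0))"
      using u w uw e K by (intro sum.cong) (auto simp: y'_def)
    also have "\<dots> = e + K * e" using fin u w by (simp add: sum.distrib)
    finally show ?thesis by (simp add: algebra_simps)
  qed
  have LipD: "\<And>v. v \<in> U \<Longrightarrow> \<bar>tau y v - tau y' v\<bar> \<le> C * e"
  proof -
    fix v assume v: "v \<in> U"
    have "\<bar>tau y v - tau y' v\<bar> \<le> L * ((1 + K) * e)" using Lip v D by metis
    also have "\<dots> \<le> L1 * ((1 + K) * e)"
      using K e by (intro mult_right_mono) (auto simp: L1_def)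
    finally show "\<bar>tau y v - tau y' v\<bar> \<le> C * e" by (simp add: C_def algebra_simps)
  qed
  have tu: "tau y' u \<le> a + C * e" using LipD[OF u(1)] by (simp add: a_def abs_if split: if_splits)
  have tw: "tau y' w \<ge> b - C * e" using LipD[OF w(1)] by (simp add: b_def abs_if split: if_splits)
  have "(\<Sum>v\<in>U. tau y' v * y' v) > 0" using tpos u(1) y'u e by auto
  also have "(\<Sum>v\<in>U. tau y' v * y' v) \<le> (\<Sum>v\<in>U. (if v = u then tau y' u * e else 0) + (if v = w then - K * e * tau y' w else 0))"
  proof (rule sum_mono)
    fix v assume v: "v \<in> U"
    show "tau y' v * y' v \<le> (if v = u then tau y' u * e else 0) + (if v = w then - K * e * tau y' w else 0)"
    proof (cases "v = u \<or> v = w")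
      case True thus ?thesis using uw y'u y'w by auto
    next
      case False
      hence "y' v = y v" using y'o by auto
      thus ?thesis using False tnn v ynp[OF v] by (simp add: mult_nonneg_nonpos)
    qed
  qed
  also have "\<dots> = tau y' u * e - K * e * tau y' w" using fin u w by (simp add: sum.distrib)
  finally have "e * (tau y' u - K * tau y' w) > 0" by (simp add: algebra_simps)
  hence "tau y' u > K * tau y' w" using e by (simp add: zero_less_mult_iff)
  moreover have "K * tau y' w \<ge> K * (b - C * e)" using tw K by simp
  ultimately have "a + C * e > 2 * a - K * C * e" using tu Kb by (simp add: algebra_simps)
  hence "(1 + K) * C * e > a" by (simp add: algebra_simps)
  with eC a show False by simp
qed



lemma excess_main:
  fixes U :: "'u set" and tau :: "('u \<Rightarrow> real) \<Rightarrow> 'u \<Rightarrow> real" and x p :: "'u \<Rightarrow> real"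
  assumes fin: "finite U" and m: "m > 0"
    and xnn: "\<And>w. w \<in> U \<Longrightarrow> x w \<ge> 0" and xsum: "(\<Sum>w\<in>U. x w) = m"
    and Lip: "\<forall>y y'. \<forall>v\<in>U. \<bar>tau y v - tau y' v\<bar> \<le> L * (\<Sum>w\<in>U. \<bar>y w - y' w\<bar>)"
    and tnn: "\<forall>y. \<forall>v\<in>U. tau y v \<ge> 0"
    and tpos: "\<forall>y. (\<exists>v\<in>U. y v > 0) \<longrightarrow> (\<Sum>v\<in>U. tau y v * y v) > 0"
    and y_def: "y = (\<lambda>w. p w - (1 / m) * (\<Sum>w'\<in>U. x w' * p w'))"
    and rest: "\<And>u. u \<in> U \<Longrightarrow> (\<Sum>u'\<in>U. x u' * tau y u) - x u * (\<Sum>u'\<in>U. tau y u') = 0"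
  shows "\<forall>u\<in>U. x u > 0 \<longrightarrow> (\<forall>v\<in>U. p v \<le> p u)"
    and "\<And>z. (\<forall>w\<in>U. x w = 0 \<longrightarrow> z w = 0) \<Longrightarrow>
           (\<forall>u\<in>U. (\<Sum>u'\<in>U. z u' * tau y u) - z u * (\<Sum>u'\<in>U. tau y u') = 0)"
proof -
  define T where "T = (\<Sum>u'\<in>U. tau y u')"
  have tnn': "\<And>v. v \<in> U \<Longrightarrow> tau y v \<ge> 0" using tnn by auto
  have T0: "T \<ge> 0" unfolding T_def using tnn' by (simp add: sum_nonneg)
  have rest': "\<And>u. u \<in> U \<Longrightarrow> m * tau y u = x u * T"
  proof -
    fix u assume u: "u \<in> U"
    have "(\<Sum>u'\<in>U. x u' * tau y u) = (\<Sum>u'\<in>U. x u') * tau y u" by (simp add: sum_distrib_right)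
    hence "(\<Sum>u'\<in>U. x u' * tau y u) = m * tau y u" using xsum by simp
    thus "m * tau y u = x u * T" using rest[OF u] by (simp add: T_def)
  qed
  have "(\<Sum>w\<in>U. x w * y w) = (\<Sum>w\<in>U. x w * p w) - (\<Sum>w\<in>U. x w) * ((1/m) * (\<Sum>w'\<in>U. x w' * p w'))"
    by (simp add: y_def right_diff_distrib sum_subtractf sum_distrib_right sum_divide_distrib)
  hence xy0: "(\<Sum>w\<in>U. x w * y w) = 0" using m xsum by simp
  have dot0: "(\<Sum>v\<in>U. tau y v * y v) = 0"
  proof (cases "T = 0")
    case True
    moreover have "(\<Sum>v\<in>U. tau y v) = 0 \<longleftrightarrow> (\<forall>v\<in>U. tau y v = 0)"
      by (rule sum_nonneg_eq_0_iff[OF fin]) (rule tnn')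
    ultimately have "\<forall>v\<in>U. tau y v = 0" by (simp add: T_def)
    thus ?thesis by simp
  next
    case False
    have "\<And>v. v \<in> U \<Longrightarrow> tau y v = (T / m) * x v"
    proof -
      fix v assume v: "v \<in> U"
      have "tau y v = (m * tau y v) / m" using m by simp
      also have "\<dots> = (x v * T) / m" using rest'[OF v] by simp
      finally show "tau y v = (T / m) * x v" by simp
    qed
    hence "(\<Sum>v\<in>U. tau y v * y v) = (T / m) * (\<Sum>v\<in>U. x v * y v)"
      by (simp add: sum_distrib_left mult.assoc)
    thus ?thesis using xy0 by simp
  qed
  have ynp: "\<And>v. v \<in> U \<Longrightarrow> y v \<le> 0"
  proof (rule ccontr)
    fix v assume "v \<in> U" "\<not> y v \<le> 0"
    hence "\<exists>v\<in>U. y v > 0" by (auto simp: not_le)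
    hence "(\<Sum>v\<in>U. tau y v * y v) > 0" using tpos by blast
    thus False using dot0 by simp
  qed
  have xyz: "\<And>w. w \<in> U \<Longrightarrow> x w * y w = 0"
  proof -
    have "(\<Sum>w\<in>U. - (x w * y w)) = 0" using xy0 by (simp add: sum_negf)
    moreover have nn: "\<And>w. w \<in> U \<Longrightarrow> - (x w * y w) \<ge> 0" using xnn ynp by (simp add: mult_nonneg_nonpos)
    moreover have "(\<Sum>w\<in>U. - (x w * y w)) = 0 \<longleftrightarrow> (\<forall>w\<in>U. - (x w * y w) = 0)"
      by (rule sum_nonneg_eq_0_iff[OF fin]) (rule nn)
    ultimately have "\<forall>w\<in>U. - (x w * y w) = 0" by blast
    thus "\<And>w. w \<in> U \<Longrightarrow> x w * y w = 0" by simp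
  qed
  show "\<forall>u\<in>U. x u > 0 \<longrightarrow> (\<forall>v\<in>U. p v \<le> p u)"
  proof (intro ballI impI)
    fix u v assume u: "u \<in> U" "x u > 0" and v: "v \<in> U"
    have "y u = 0" using xyz[OF u(1)] u(2) by simp
    moreover have "y v \<le> 0" using ynp[OF v] .
    ultimately show "p v \<le> p u" by (simp add: y_def)
  qed
  fix z :: "'u \<Rightarrow> real" assume z: "\<forall>w\<in>U. x w = 0 \<longrightarrow> z w = 0"
  show "\<forall>u\<in>U. (\<Sum>u'\<in>U. z u' * tau y u) - z u * (\<Sum>u'\<in>U. tau y u') = 0"
  proof (cases "T = 0")
    case True
    moreover have "(\<Sum>v\<in>U. tau y v) = 0 \<longleftrightarrow> (\<forall>v\<in>U. tau y v = 0)"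
      by (rule sum_nonneg_eq_0_iff[OF fin]) (rule tnn')
    ultimately have "\<forall>v\<in>U. tau y v = 0" by (simp add: T_def)
    thus ?thesis by simp
  next
    case False
    hence Tp: "T > 0" using T0 by simp
    have xpos: "\<And>v. v \<in> U \<Longrightarrow> tau y v > 0 \<Longrightarrow> x v > 0"
    proof -
      fix v assume "v \<in> U" "tau y v > 0"
      hence "m * tau y v > 0" using m by simp
      hence "x v * T > 0" using rest' \<open>v \<in> U\<close> by simp
      thus "x v > 0" using Tp by (simp add: zero_less_mult_iff)
    qed
    have "\<exists>us\<in>U. tau y us > 0"
    proof (rule ccontr)
      assume "\<not> (\<exists>us\<in>U. tau y us > 0)"
      hence "\<forall>v\<in>U. tau y v \<le> 0" by (auto simp: not_less)
      hence "T \<le> 0" unfolding T_def by (simp add: sum_nonpos)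
      thus False using Tp by simp
    qed
    then obtain us where us: "us \<in> U" "tau y us > 0" by blast
    have oth: "\<And>v. v \<in> U \<Longrightarrow> v \<noteq> us \<Longrightarrow> tau y v = 0"
    proof (rule ccontr)
      fix v assume v: "v \<in> U" "v \<noteq> us" "tau y v \<noteq> 0"
      hence vp: "tau y v > 0" using tnn'[OF v(1)] v(3) by simp
      show False
      proof (rule excess_single[OF fin Lip tnn tpos ynp us(1) _ us(2) v(1) _ vp])
        show "y us = 0" using xyz[OF us(1)] xpos[OF us] by simp
        show "y v = 0" using xyz[OF v(1)] xpos[OF v(1) vp] by simp
        show "us \<noteq> v" using v by simp
      qed
    qed
    have xoth: "\<And>v. v \<in> U \<Longrightarrow> v \<noteq> us \<Longrightarrow> z v = 0"
    proof -
      fix v assume v: "v \<in> U" "v \<noteq> us"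
      have "x v * T = 0" using rest'[OF v(1)] oth[OF v] by simp
      hence "x v = 0" using Tp by simp
      thus "z v = 0" using z v by auto
    qed
    have Tus: "T = tau y us"
    proof -
      have "T = tau y us + (\<Sum>v\<in>U - {us}. tau y v)" unfolding T_def by (rule sum.remove[OF fin us(1)])
      moreover have "(\<Sum>v\<in>U - {us}. tau y v) = 0" using oth by (intro sum.neutral) auto
      ultimately show ?thesis by simp
    qed
    have zs: "(\<Sum>u'\<in>U. z u') = z us"
    proof -
      have "(\<Sum>u'\<in>U. z u') = z us + (\<Sum>v\<in>U - {us}. z v)" by (rule sum.remove[OF fin us(1)])
      moreover have "(\<Sum>v\<in>U - {us}. z v) = 0" using xoth by (intro sum.neutral) auto
      ultimately show ?thesis by simp
    qed
    show ?thesis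
    proof
      fix u assume u: "u \<in> U"
      have "(\<Sum>u'\<in>U. z u' * tau y u) = z us * tau y u" using zs by (simp add: sum_distrib_right[symmetric])
      thus "(\<Sum>u'\<in>U. z u' * tau y u) - z u * (\<Sum>u'\<in>U. tau y u') = 0"
      proof (cases "u = us")
        case True
        thus ?thesis using \<open>(\<Sum>u'\<in>U. z u' * tau y u) = z us * tau y u\<close> Tus by (simp add: T_def)
      next
        case False
        thus ?thesis using oth[OF u] xoth[OF u] by simp
      qed
    qed
  qed
qed



theorem mainTheorem4:
  fixes S :: "'c::finite \<Rightarrow> 's::finite set"
    and A :: "'c \<Rightarrow> 's \<Rightarrow> 'a::finite set"
    and phi :: "'c \<Rightarrow> 's \<Rightarrow> 'a \<Rightarrow> 's \<Rightarrow> real"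
    and U :: "'c \<Rightarrow> 'u::finite set"
    and pol :: "'c \<Rightarrow> 'u \<Rightarrow> 's \<Rightarrow> 'a"
    and m Rd :: "'c \<Rightarrow> real"
    and F :: "'c \<Rightarrow> real^('c \<times> 's \<times> 'u) \<Rightarrow> 'u \<Rightarrow> real"
    and rho :: "'c \<Rightarrow> ('u \<Rightarrow> real) \<Rightarrow> ('u \<Rightarrow> real) \<Rightarrow> 'u \<Rightarrow> 'u \<Rightarrow> real"
    and ImC :: "'c set"
    and varphi :: "'c \<Rightarrow> real \<Rightarrow> real"
    and mu :: "real^('c \<times> 's \<times> 'u)"
  assumes S_ne: "\<And>c. S c \<noteq> {}"
    and A_ne: "\<And>c s. s \<in> S c \<Longrightarrow> A c s \<noteq> {}"
    and phi_nonneg: "\<And>c s' a s. s' \<in> S c \<Longrightarrow> a \<in> A c s' \<Longrightarrow> s \<in> S c \<Longrightarrow> phi c s' a s \<ge> 0"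
    and phi_sum: "\<And>c s' a. s' \<in> S c \<Longrightarrow> a \<in> A c s' \<Longrightarrow> (\<Sum>s\<in>S c. phi c s' a s) = 1"
    and U_ne: "\<And>c. U c \<noteq> {}"
    and pol_act: "\<And>c u s. u \<in> U c \<Longrightarrow> s \<in> S c \<Longrightarrow> pol c u s \<in> A c s"
    and pol_inj: "\<And>c. inj_on (\<lambda>u. restrict (pol c u) (S c)) (U c)"
    and m_pos: "\<And>c. m c > 0"
    and Rd_pos: "\<And>c. Rd c > 0"
    and unichain: "\<And>c u. u \<in> U c \<Longrightarrow> unique_recurrent_class (S c) (kernel A phi pol c u)"
    and F_C1: "\<exists>Nb. open Nb \<and> popX S U m \<subseteq> Nb \<and>
                 (\<forall>c u. \<exists>D :: real^('c \<times> 's \<times> 'u) \<Rightarrow> ((real^('c \<times> 's \<times> 'u)) \<Rightarrow>\<^sub>L real).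
                    (\<forall>y\<in>Nb. ((\<lambda>z. F c z u) has_derivative blinfun_apply (D y)) (at y)) \<and>
                    continuous_on Nb D)"
    and rho_protocol: "\<And>c. protocol (U c) (rho c)"
    and ImC_ne: "ImC \<noteq> {}"
    and ImC_prot: "\<And>c. c \<in> ImC \<Longrightarrow> imitative_via_comparison (U c) (m c) (rho c) (varphi c)"
    and other_prot: "\<And>c. c \<notin> ImC \<Longrightarrow>
                        excess_payoff (U c) (m c) (rho c) \<or> pairwise_comparison (U c) (rho c)"
    and rest: "rest_point S U A phi pol m Rd F rho mu"
    and not_NE: "\<not> MSNE S U A phi pol m Rd F mu"
  shows "\<exists>d\<in>ImC. \<forall>v\<in>U d. (\<forall>j\<in>U d. F d mu j \<le> F d mu v) \<longrightarrow>
            xdist S mu d v = 0 \<and> G_imit S U m F (varphi d) d v mu > 0"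
  proof -
  from rest have muX: "mu \<in> popX S U m"
    and rst: "\<And>c s u. s \<in> S c \<Longrightarrow> u \<in> U c \<Longrightarrow>
                f_d S A phi pol Rd mu c s u + f_r S U F rho mu c s u = 0"
    by (auto simp: rest_point_def)
  define x where "x c = xdist S mu c" for c
  define p where "p c = F c mu" for c
  define r where "r c = rho c (p c) (x c)" for c
  have munn: "\<And>c s u. s \<in> S c \<Longrightarrow> u \<in> U c \<Longrightarrow> mu $ (c, s, u) \<ge> 0"
    using muX by (auto simp: popX_def)
  have musum: "\<And>c. (\<Sum>s\<in>S c. \<Sum>u\<in>U c. mu $ (c, s, u)) = m c"
    using muX by (auto simp: popX_def)
  have xnn: "\<And>c u. u \<in> U c \<Longrightarrow> x c u \<ge> 0"
    unfolding x_def xdist_def using munn by (simp add: sum_nonneg)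
  have xsum: "\<And>c. (\<Sum>u\<in>U c. x c u) = m c"
    unfolding x_def xdist_def using musum by (simp add: sum.swap[of _ "U _"])
  have mule: "\<And>c s u. s \<in> S c \<Longrightarrow> u \<in> U c \<Longrightarrow> mu $ (c, s, u) \<le> x c u"
    unfolding x_def xdist_def using munn by (intro member_le_sum) auto
  have xnon: "\<And>c. nonneg_on (U c) (x c)" using xnn by (simp add: nonneg_on_def)
  have xpol: "\<And>c. policy_dist (U c) (m c) (x c)" using xnon xsum by (simp add: policy_dist_def)
  have fr_eq: "\<And>c s u. f_r S U F rho mu c s u =
      (\<Sum>u'\<in>U c. mu $ (c, s, u') * r c u' u) - mu $ (c, s, u) * (\<Sum>u'\<in>U c. r c u u')"
    by (simp add: f_r_def r_def p_def x_def)
  have xrest: "\<And>c u. u \<in> U c \<Longrightarrow>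
      (\<Sum>u'\<in>U c. x c u' * r c u' u) - x c u * (\<Sum>u'\<in>U c. r c u u') = 0"
  proof -
    fix c u assume u: "u \<in> U c"
    have "(\<Sum>s\<in>S c. f_d S A phi pol Rd mu c s u + f_r S U F rho mu c s u) = 0"
      using rst u by simp
    moreover have "(\<Sum>s\<in>S c. f_d S A phi pol Rd mu c s u) = 0"
      by (rule sum_fd_zero) (use phi_sum pol_act u in auto)
    ultimately have "(\<Sum>s\<in>S c. f_r S U F rho mu c s u) = 0" by (simp add: sum.distrib)
    thus "(\<Sum>u'\<in>U c. x c u' * r c u' u) - x c u * (\<Sum>u'\<in>U c. r c u u') = 0"
      by (simp add: sum_fr r_def p_def x_def)
  qed
  have rnn: "\<And>c u v. u \<in> U c \<Longrightarrow> v \<in> U c \<Longrightarrow> r c u v \<ge> 0"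
    using rho_protocol xnon by (auto simp: protocol_def r_def)
  define goodc where "goodc = (\<lambda>c. (\<forall>u\<in>U c. x c u > 0 \<longrightarrow> (\<forall>v\<in>U c. p c v \<le> p c u)) \<and>
      (\<forall>s\<in>S c. \<forall>u\<in>U c. f_r S U F rho mu c s u = 0))"
  have frz: "\<And>c. (\<forall>u\<in>U c. x c u > 0 \<longrightarrow> (\<forall>v\<in>U c. p c v \<le> p c u)) \<Longrightarrow>
      (\<forall>u'\<in>U c. \<forall>u\<in>U c. (\<forall>v\<in>U c. p c v \<le> p c u') \<longrightarrow> r c u' u = 0) \<Longrightarrow> goodc c"
  proof -
    fix c assume NE: "\<forall>u\<in>U c. x c u > 0 \<longrightarrow> (\<forall>v\<in>U c. p c v \<le> p c u)"
      and rz: "\<forall>u'\<in>U c. \<forall>u\<in>U c. (\<forall>v\<in>U c. p c v \<le> p c u') \<longrightarrow> r c u' u = 0"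
    have pos_best: "\<And>s u. s \<in> S c \<Longrightarrow> u \<in> U c \<Longrightarrow> mu $ (c, s, u) \<noteq> 0 \<Longrightarrow> \<forall>v\<in>U c. p c v \<le> p c u"
    proof -
      fix s u assume su: "s \<in> S c" "u \<in> U c" "mu $ (c, s, u) \<noteq> 0"
      have "x c u > 0" using munn[OF su(1,2)] mule[OF su(1,2)] su(3) by linarith
      thus "\<forall>v\<in>U c. p c v \<le> p c u" using NE su by auto
    qed
    have "\<forall>s\<in>S c. \<forall>u\<in>U c. f_r S U F rho mu c s u = 0"
    proof (intro ballI)
      fix s u assume s: "s \<in> S c" and u: "u \<in> U c"
      have "(\<Sum>u'\<in>U c. mu $ (c, s, u') * r c u' u) = 0"
      proof (rule sum.neutral, rule ballI)
        fix u' assume u': "u' \<in> U c"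
        show "mu $ (c, s, u') * r c u' u = 0"
          using pos_best[OF s u'] rz u' u by (cases "mu $ (c, s, u') = 0") auto
      qed
      moreover have "mu $ (c, s, u) * (\<Sum>u'\<in>U c. r c u u') = 0"
      proof (cases "mu $ (c, s, u) = 0")
        case False
        hence "\<forall>u'\<in>U c. r c u u' = 0" using pos_best[OF s u] rz u by auto
        thus ?thesis by simp
      qed simp
      ultimately show "f_r S U F rho mu c s u = 0" by (simp add: fr_eq)
    qed
    thus "goodc c" using NE by (simp add: goodc_def)
  qed
  have nonImC: "\<And>c. c \<notin> ImC \<Longrightarrow> goodc c"
  proof -
    fix c assume c: "c \<notin> ImC"
    from other_prot[OF c] show "goodc c"
    proof
      assume pc: "pairwise_comparison (U c) (rho c)"
      have rpos: "\<And>u v. u \<in> U c \<Longrightarrow> v \<in> U c \<Longrightarrow> r c u v > 0 \<longleftrightarrow> p c v > p c u"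
        using pc xnon by (auto simp: pairwise_comparison_def r_def)
      have NE: "\<forall>u\<in>U c. x c u > 0 \<longrightarrow> (\<forall>v\<in>U c. p c v \<le> p c u)"
        using pairwise_NE[of "U c" "x c" "r c" "p c", OF _ xnn rnn rpos xrest] by auto
      show "goodc c"
      proof (rule frz[OF NE], intro ballI impI)
        fix u' u assume u': "u' \<in> U c" and u: "u \<in> U c" and b: "\<forall>v\<in>U c. p c v \<le> p c u'"
        have "\<not> r c u' u > 0" using rpos[OF u' u] b u by auto
        thus "r c u' u = 0" using rnn[OF u' u] by simp
      qed
    next
      assume ep: "excess_payoff (U c) (m c) (rho c)"
      then obtain tau :: "('u \<Rightarrow> real) \<Rightarrow> 'u \<Rightarrow> real" and L where
        Lip: "\<forall>y y'. \<forall>v\<in>U c. \<bar>tau y v - tau y' v\<bar> \<le> L * (\<Sum>w\<in>U c. \<bar>y w - y' w\<bar>)"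
        and tnn: "\<forall>y. \<forall>v\<in>U c. tau y v \<ge> 0"
        and tpos: "\<forall>y. (\<exists>v\<in>U c. y v > 0) \<longrightarrow> (\<Sum>v\<in>U c. tau y v * y v) > 0"
        and trho: "\<forall>p x. policy_dist (U c) (m c) x \<longrightarrow>
           (\<forall>u\<in>U c. \<forall>v\<in>U c. rho c p x u v = tau (\<lambda>w. p w - (1 / m c) * (\<Sum>w'\<in>U c. x w' * p w')) v)"
        unfolding excess_payoff_def by blast
      define y where "y = (\<lambda>w. p c w - (1 / m c) * (\<Sum>w'\<in>U c. x c w' * p c w'))"
      have rt: "\<And>u v. u \<in> U c \<Longrightarrow> v \<in> U c \<Longrightarrow> r c u v = tau y v"
        using trho xpol by (simp add: r_def y_def)
      have rest2: "\<And>u. u \<in> U c \<Longrightarrow> (\<Sum>u'\<in>U c. x c u' * tau y u) - x c u * (\<Sum>u'\<in>U c. tau y u') = 0"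
      proof -
        fix u assume u: "u \<in> U c"
        have "(\<Sum>u'\<in>U c. x c u' * r c u' u) = (\<Sum>u'\<in>U c. x c u' * tau y u)"
          using rt u by (intro sum.cong) auto
        moreover have "(\<Sum>u'\<in>U c. r c u u') = (\<Sum>u'\<in>U c. tau y u')"
          using rt u by (intro sum.cong) auto
        ultimately show "(\<Sum>u'\<in>U c. x c u' * tau y u) - x c u * (\<Sum>u'\<in>U c. tau y u') = 0"
          using xrest[OF u] by simp
      qed
      have f1: "finite (U c)" by simp
      have f2: "m c > 0" using m_pos by simp
      have f3: "\<And>w. w \<in> U c \<Longrightarrow> x c w \<ge> 0" using xnn by simp
      have f4: "(\<Sum>w\<in>U c. x c w) = m c" using xsum by simp
      note EM = excess_main[OF f1 f2 f3 f4 Lip tnn tpos y_def rest2]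
      have NE: "\<forall>u\<in>U c. x c u > 0 \<longrightarrow> (\<forall>v\<in>U c. p c v \<le> p c u)" using EM(1) by simp
      have "\<forall>s\<in>S c. \<forall>u\<in>U c. f_r S U F rho mu c s u = 0"
      proof (intro ballI)
        fix s u assume s: "s \<in> S c" and u: "u \<in> U c"
        have z: "\<forall>w\<in>U c. x c w = 0 \<longrightarrow> mu $ (c, s, w) = 0"
          using munn[OF s] mule[OF s] by force
        have "(\<Sum>u'\<in>U c. mu $ (c, s, u') * tau y u) - mu $ (c, s, u) * (\<Sum>u'\<in>U c. tau y u') = 0"
          using EM(2)[of "\<lambda>w. mu $ (c, s, w)"] z u by simp
        moreover have "(\<Sum>u'\<in>U c. mu $ (c, s, u') * r c u' u) = (\<Sum>u'\<in>U c. mu $ (c, s, u') * tau y u)"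
          using rt u by (intro sum.cong) auto
        moreover have "(\<Sum>u'\<in>U c. r c u u') = (\<Sum>u'\<in>U c. tau y u')"
          using rt u by (intro sum.cong) auto
        ultimately show "f_r S U F rho mu c s u = 0" by (simp add: fr_eq)
      qed
      thus "goodc c" using NE by (simp add: goodc_def)
    qed
  qed
  have phinn: "\<And>c d. c \<in> ImC \<Longrightarrow> varphi c d \<ge> 0"
  proof -
    fix c d assume c: "c \<in> ImC"
    show "varphi c d \<ge> 0" using ImC_prot[OF c] unfolding imitative_via_comparison_def
      by (cases "d \<le> 0") (auto simp: not_le intro: less_imp_le)
  qed
  have phiz: "\<And>c d. c \<in> ImC \<Longrightarrow> d \<le> 0 \<Longrightarrow> varphi c d = 0"
    using ImC_prot unfolding imitative_via_comparison_def by blast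
  have phip: "\<And>c d. c \<in> ImC \<Longrightarrow> d > 0 \<Longrightarrow> varphi c d > 0"
    using ImC_prot unfolding imitative_via_comparison_def by blast
  have rim: "\<And>c u v. c \<in> ImC \<Longrightarrow> u \<in> U c \<Longrightarrow> v \<in> U c \<Longrightarrow> r c u v = x c v / m c * varphi c (p c v - p c u)"
    using ImC_prot xpol unfolding imitative_via_comparison_def by (simp add: r_def r_comp_def)
  have ImCfine: "\<And>c v. c \<in> ImC \<Longrightarrow> v \<in> U c \<Longrightarrow> (\<forall>j\<in>U c. p c j \<le> p c v) \<Longrightarrow> x c v > 0 \<Longrightarrow> goodc c"
  proof -
    fix c v assume c: "c \<in> ImC" and v: "v \<in> U c" and vb: "\<forall>j\<in>U c. p c j \<le> p c v" and xv: "x c v > 0"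
    have mc: "m c > 0" using m_pos by simp
    have out0: "(\<Sum>u'\<in>U c. r c v u') = 0"
      using rim[OF c v] phiz[OF c] vb by (intro sum.neutral) auto
    have in0: "(\<Sum>u'\<in>U c. x c u' * r c u' v) = 0" using xrest[OF v] out0 by simp
    have termnn: "\<forall>u'\<in>U c. x c u' * r c u' v \<ge> 0" using xnn rnn v by simp
    have used_best: "\<And>u'. u' \<in> U c \<Longrightarrow> x c u' > 0 \<Longrightarrow> \<forall>j\<in>U c. p c j \<le> p c u'"
    proof -
      fix u' assume u': "u' \<in> U c" "x c u' > 0"
      have all0: "\<forall>w\<in>U c. x c w * r c w v = 0"
        using sum_nonneg_eq_0_iff[of "U c" "\<lambda>u'. x c u' * r c u' v"] in0 termnn by simp
      hence "x c u' * r c u' v = 0" using u' by blast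
      hence "r c u' v = 0" using u' by simp
      hence "varphi c (p c v - p c u') = 0" using rim[OF c u'(1) v] xv mc by simp
      hence "\<not> p c v - p c u' > 0" using phip[OF c] by (metis less_irrefl)
      thus "\<forall>j\<in>U c. p c j \<le> p c u'" using vb by force
    qed
    show "goodc c"
    proof (rule frz)
      show "\<forall>u\<in>U c. x c u > 0 \<longrightarrow> (\<forall>v\<in>U c. p c v \<le> p c u)" using used_best by blast
      show "\<forall>u'\<in>U c. \<forall>u\<in>U c. (\<forall>v\<in>U c. p c v \<le> p c u') \<longrightarrow> r c u' u = 0"
        using rim[OF c] phiz[OF c] by auto
    qed
  qed
  have "\<exists>c. \<not> goodc c"
  proof (rule ccontr)
    assume "\<not> (\<exists>c. \<not> goodc c)"
    hence allf: "\<And>c. goodc c" by blast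
    have "MSNE S U A phi pol m Rd F mu"
      unfolding MSNE_def
    proof (intro conjI allI muX)
      fix c
      show "\<forall>u\<in>U c. 0 < xdist S mu c u \<longrightarrow> (\<forall>v\<in>U c. F c mu v \<le> F c mu u)"
        using allf[of c] by (simp add: goodc_def x_def p_def)
      show "\<forall>s\<in>S c. \<forall>u\<in>U c. f_d S A phi pol Rd mu c s u = 0"
      proof (intro ballI)
        fix s u assume su: "s \<in> S c" "u \<in> U c"
        have "f_r S U F rho mu c s u = 0" using allf[of c] su by (simp add: goodc_def)
        thus "f_d S A phi pol Rd mu c s u = 0" using rst[OF su] by simp
      qed
    qed
    thus False using not_NE by simp
  qed
  then obtain d where nf: "\<not> goodc d" by blast
  have d: "d \<in> ImC" using nonImC nf by blast
  show ?thesis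
  proof (rule bexI[OF _ d], intro ballI impI)
    fix v assume v: "v \<in> U d" and vb: "\<forall>j\<in>U d. F d mu j \<le> F d mu v"
    have vb': "\<forall>j\<in>U d. p d j \<le> p d v" using vb by (simp add: p_def)
    have allz: "\<And>w. w \<in> U d \<Longrightarrow> (\<forall>j\<in>U d. p d j \<le> p d w) \<Longrightarrow> x d w = 0"
    proof -
      fix w assume w: "w \<in> U d" "\<forall>j\<in>U d. p d j \<le> p d w"
      have "\<not> x d w > 0" using ImCfine[OF d w] nf by blast
      thus "x d w = 0" using xnn[OF w(1)] by simp
    qed
    have xv0: "x d v = 0" using allz[OF v vb'] .
    have mc: "m d > 0" using m_pos by simp
    have "\<exists>u'\<in>U d. x d u' > 0"
    proof (rule ccontr)
      assume "\<not> (\<exists>u'\<in>U d. x d u' > 0)"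
      hence "\<forall>w\<in>U d. x d w \<le> 0" by (auto simp: not_less)
      hence "(\<Sum>w\<in>U d. x d w) \<le> 0" by (simp add: sum_nonpos)
      thus False using xsum[of d] mc by simp
    qed
    then obtain u' where u': "u' \<in> U d" "x d u' > 0" by blast
    have "p d u' \<noteq> p d v"
    proof
      assume "p d u' = p d v"
      hence "x d u' = 0" using allz[OF u'(1)] vb' by simp
      thus False using u' by simp
    qed
    hence lt: "p d u' < p d v" using vb' u' by force
    have Geq: "G_imit S U m F (varphi d) d v mu =
       (\<Sum>w\<in>U d. x d w / m d * (varphi d (p d v - p d w) - varphi d (p d w - p d v)))"
      by (simp add: G_imit_def r_comp_def x_def p_def)
    have tnn: "\<forall>w\<in>U d. x d w / m d * (varphi d (p d v - p d w) - varphi d (p d w - p d v)) \<ge> 0"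
      using xnn mc phinn[OF d] phiz[OF d] vb' by simp
    have tp: "x d u' / m d * (varphi d (p d v - p d u') - varphi d (p d u' - p d v)) > 0"
      using u' mc phip[OF d] phiz[OF d] lt by simp
    have "G_imit S U m F (varphi d) d v mu > 0"
      unfolding Geq by (rule sum_pos2[of "U d" u' "\<lambda>w. x d w / m d * (varphi d (p d v - p d w) - varphi d (p d w - p d v))"]) (use tnn tp u' in auto)
    thus "xdist S mu d v = 0 \<and> G_imit S U m F (varphi d) d v mu > 0"
      using xv0 by (simp add: x_def)
  qed
qed

end
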